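(* Let $n$ be an even number and $r$ an integer with $0\le r\le n$. Then the tensor $g^{(\alpha_1\alpha_2}\cdots g^{\alpha_{n-1}\alpha_n)}\mu_{\alpha_{n-r+1}}\cdots\mu_{\alpha_n}$ (a function of $\mu_\beta$ with free indices $\alpha_1,\dots,\alpha_{n-r}$) belongs to $\mathcal F$ and $$g^{(\alpha_1\alpha_2}\cdots g^{\alpha_{n-1}\alpha_n)}\mu_{\alpha_{n-r+1}}\cdots\mu_{\alpha_n}=\sum_{s=0}^{[\frac{n-r}{2}]}\phi^{n-r}_{s,r}\,g^{(\alpha_1\alpha_2}\cdots g^{\alpha_{2s-1}\alpha_{2s}}\mu^{\alpha_{2s+1}}\cdots\mu^{\alpha_{n-r})},$$ with $$\phi^{n-r}_{s,r}=\begin{cases}1 & \text{for } r\le1,\ s=[\frac{n-r}{2}],\\ 0 & \text{for } r\le1,\ 0\le s\le[\frac{n-r}{2}]-1,\\ \dfrac{r!\,(n-r)!}{(2s+2r-n)!!\,(2s)!!\,(n-r-2s)!\,(n-1)!!}(-\gamma^2)^{s+r-\frac n2} & \text{for } r\ge2,\ \frac n2-r\le s\le[\frac{n-r}{2}],\\ 0 & \text{for } r\ge2,\ 0\le s\le\frac n2-r-1.\end{cases}$$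
   Context: Work in 4-dimensional Minkowski space with metric $g_{\alpha\beta}$ of signature $(-,+,+,+)$; indices are raised and lowered with $g$ and repeated indices are summed. $\lambda$ is a real scalar, $\mu_\beta$ is a time-like covector and $\gamma=\sqrt{-\mu^\alpha\mu_\alpha}>0$. Round brackets around indices denote normalized total symmetrization; $[x]$ denotes the integer part of $x$. The family $\mathcal F$ consists of the (smooth) Lorentz-covariant (isotropic) tensor-valued functions $\phi^{\alpha_1\cdots\alpha_n}(\lambda,\mu_\beta)$ which are totally symmetric in their indices and whose derivative $\partial\phi^{\alpha_1\cdots\alpha_n}/\partial\mu_\beta$ is totally symmetric in $\alpha_1,\dots,\alpha_n,\beta$. *)

theory Defs
  imports "HOL-Analysis.Analysis"
begin

text \<open>Indices range over the type 4 (values 0,1,2,3; 0 is the time index).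
  Covectors mu are elements of real^4 with components mu $ b = mu_b.
  A rank-k tensor is a function on index lists of length k.\<close>

definition gm :: "4 \<Rightarrow> 4 \<Rightarrow> real" where
  "gm a b = (if a = b then (if a = 0 then -1 else 1) else 0)"

definition raise :: "real^4 \<Rightarrow> 4 \<Rightarrow> real" where
  "raise mu a = (\<Sum>b\<in>UNIV. gm a b * mu $ b)"

definition mdot :: "real^4 \<Rightarrow> real" where
  "mdot mu = (\<Sum>a\<in>UNIV. raise mu a * mu $ a)"

definition timelike :: "real^4 \<Rightarrow> bool" where
  "timelike mu \<longleftrightarrow> mdot mu < 0"

definition gam :: "real^4 \<Rightarrow> real" where
  "gam mu = sqrt (- mdot mu)"

definition symm :: "(4 list \<Rightarrow> real) \<Rightarrow> 4 list \<Rightarrow> real" where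
  "symm T xs = (\<Sum>p\<in>{p. p permutes {..<length xs}}.
      T (map (\<lambda>i. xs ! p i) [0..<length xs])) / fact (length xs)"

definition tsym :: "nat \<Rightarrow> (4 list \<Rightarrow> real) \<Rightarrow> bool" where
  "tsym k T \<longleftrightarrow> (\<forall>xs p. length xs = k \<longrightarrow> p permutes {..<k} \<longrightarrow>
      T (map (\<lambda>i. xs ! p i) [0..<k]) = T xs)"

fun Ck :: "nat \<Rightarrow> 'a::euclidean_space set \<Rightarrow> ('a \<Rightarrow> real) \<Rightarrow> bool" where
  "Ck 0 U f = continuous_on U f"
| "Ck (Suc n) U f = ((\<forall>x\<in>U. f differentiable (at x)) \<and>
      (\<forall>i\<in>Basis. Ck n U (\<lambda>x. frechet_derivative f (at x) i)))"

definition smooth_on :: "'a::euclidean_space set \<Rightarrow> ('a \<Rightarrow> real) \<Rightarrow> bool" where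
  "smooth_on U f \<longleftrightarrow> (\<forall>k. Ck k U f)"

definition dmu :: "(real \<Rightarrow> real^4 \<Rightarrow> 4 list \<Rightarrow> real) \<Rightarrow> real \<Rightarrow> real^4 \<Rightarrow> 4 list \<Rightarrow> 4 \<Rightarrow> real" where
  "dmu phi lam mu A b =
     frechet_derivative (\<lambda>p::real \<times> (real^4). phi (fst p) (snd p) A) (at (lam, mu)) (0, axis b 1)"

text \<open>Lorentz transformations L (L $ a $ b = L^a_b), full group O(1,3)\<close>
definition lorentz :: "real^4^4 \<Rightarrow> bool" where
  "lorentz L \<longleftrightarrow> (\<forall>c d. (\<Sum>a\<in>UNIV. \<Sum>b\<in>UNIV. gm a b * L $ a $ c * L $ b $ d) = gm c d)"

definition cov_act :: "real^4 \<Rightarrow> real^4^4 \<Rightarrow> real^4" where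
  "cov_act mu L = (\<chi> b. \<Sum>a\<in>UNIV. mu $ a * L $ a $ b)"

text \<open>Lorentz covariance of a rank-k contravariant tensor function:
  phi^A(lam, mu) = L^{a1}_{b1} ... L^{ak}_{bk} phi^B(lam, mu L), equivalently
  phi(lam, mu L^{-1}) = L...L phi(lam, mu).\<close>
definition covariant :: "nat \<Rightarrow> (real \<Rightarrow> real^4 \<Rightarrow> 4 list \<Rightarrow> real) \<Rightarrow> bool" where
  "covariant k phi \<longleftrightarrow> (\<forall>L lam mu A. lorentz L \<longrightarrow> timelike mu \<longrightarrow> length A = k \<longrightarrow>
     phi lam mu A = (\<Sum>B\<in>{B::4 list. length B = k}.
        (\<Prod>i<k. L $ (A ! i) $ (B ! i)) * phi lam (cov_act mu L) B))"

definition in_F :: "nat \<Rightarrow> (real \<Rightarrow> real^4 \<Rightarrow> 4 list \<Rightarrow> real) \<Rightarrow> bool" where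
  "in_F k phi \<longleftrightarrow>
     (\<forall>A. length A = k \<longrightarrow>
         smooth_on (UNIV \<times> {mu. timelike mu}) (\<lambda>p. phi (fst p) (snd p) A))
   \<and> (\<forall>lam mu. timelike mu \<longrightarrow> tsym k (phi lam mu))
   \<and> (\<forall>lam mu. timelike mu \<longrightarrow> tsym (Suc k) (\<lambda>xs. dmu phi lam mu (butlast xs) (last xs)))
   \<and> covariant k phi"

definition gprod :: "nat \<Rightarrow> 4 list \<Rightarrow> real" where
  "gprod m xs = (\<Prod>i<m. gm (xs ! (2 * i)) (xs ! (2 * i+1)))"

definition lhsT :: "nat \<Rightarrow> nat \<Rightarrow> real^4 \<Rightarrow> 4 list \<Rightarrow> real" where
  "lhsT n r mu A = (\<Sum>C\<in>{C::4 list. length C = r}.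
      symm (gprod (n div 2)) (A @ C) * (\<Prod>j<r. mu $ (C ! j)))"

definition gmuT :: "nat \<Rightarrow> real^4 \<Rightarrow> 4 list \<Rightarrow> real" where
  "gmuT s mu xs = gprod s xs * (\<Prod>j\<in>{2 * s ..< length xs}. raise mu (xs ! j))"

fun dfact :: "nat \<Rightarrow> nat" where
  "dfact 0 = 1"
| "dfact (Suc 0) = 1"
| "dfact (Suc (Suc n)) = Suc (Suc n) * dfact n"

definition phicoef :: "nat \<Rightarrow> nat \<Rightarrow> nat \<Rightarrow> real \<Rightarrow> real" where
  "phicoef n r s g =
    (if r \<le> 1 then (if s = (n - r) div 2 then 1 else 0)
     else if n div 2 \<le> s + r then
       fact r * fact (n - r) /
         (real (dfact (2 * s + 2 * r - n)) * real (dfact (2 * s)) * fact (n - r - 2 * s) * real (dfact (n - 1)))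
         * (- (g^2)) ^ (s + r - n div 2)
     else 0)"

end

theory Submission
  imports Defs
begin


lemma finite_len: "finite {C::('a::finite) list. length C = r}"
  using finite_lists_length_eq[of "UNIV::'a set" r] by simp

lemma sum_len_Suc:
  "(\<Sum>C\<in>{C::('a::finite) list. length C = Suc r}. f C) = (\<Sum>c\<in>UNIV. \<Sum>C\<in>{C. length C = r}. f (c # C))"
proof -
  have e: "{C::'a list. length C = Suc r} = (\<lambda>x. fst x # snd x) ` (UNIV \<times> {C. length C = r})"
    by (auto simp: length_Suc_conv image_def)
  have i: "inj_on (\<lambda>x. fst x # snd x) (UNIV \<times> {C::'a list. length C = r})"
    by (auto simp: inj_on_def)
  have "(\<Sum>C\<in>{C::'a list. length C = Suc r}. f C) = (\<Sum>x\<in>UNIV \<times> {C::'a list. length C = r}. f (fst x # snd x))"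
    unfolding e by (subst sum.reindex[OF i]) simp
  also have "\<dots> = (\<Sum>c\<in>UNIV. \<Sum>C\<in>{C. length C = r}. f (c # C))"
    by (subst sum.cartesian_product) (simp add: case_prod_beta)
  finally show ?thesis .
qed

lemma symm_alt: "symm T xs = (\<Sum>p\<in>{p. p permutes {..<length xs}}. T (permute_list p xs)) / fact (length xs)"
  by (simp add: symm_def permute_list_def)

lemma symm_perm:
  assumes "p permutes {..<length xs}"
  shows "symm T (permute_list p xs) = symm T xs"
proof -
  have "(\<Sum>q\<in>{q. q permutes {..<length xs}}. T (permute_list q (permute_list p xs)))
      = (\<Sum>q\<in>{q. q permutes {..<length xs}}. T (permute_list (p \<circ> q) xs))"
    by (intro sum.cong) (auto simp: permute_list_compose)
  also have "\<dots> = (\<Sum>q\<in>{q. q permutes {..<length xs}}. T (permute_list q xs))"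
    using setum_permutations_compose_left[OF assms, of "\<lambda>q. T (permute_list q xs)"] by simp
  finally show ?thesis by (simp add: symm_alt)
qed

lemma tsym_symm: "tsym k (symm T)"
  unfolding tsym_def
  using symm_perm by (metis permute_list_def)

lemma symm_right:
  assumes "q permutes {..<length xs}"
    and "\<And>ys. length ys = length xs \<Longrightarrow> T' ys = T (permute_list q ys)"
  shows "symm T' xs = symm T xs"
proof -
  have "(\<Sum>p\<in>{p. p permutes {..<length xs}}. T' (permute_list p xs))
      = (\<Sum>p\<in>{p. p permutes {..<length xs}}. T (permute_list (p \<circ> q) xs))"
    using assms by (intro sum.cong) (auto simp: permute_list_compose)
  also have "\<dots> = (\<Sum>p\<in>{p. p permutes {..<length xs}}. T (permute_list p xs))"
    using sum_permutations_compose_right[OF assms(1), of "\<lambda>q. T (permute_list q xs)"] by simp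
  finally show ?thesis by (simp add: symm_alt)
qed

lemma symm_cong:
  assumes "\<And>ys. length ys = length xs \<Longrightarrow> T ys = T' ys"
  shows "symm T xs = symm T' xs"
  unfolding symm_alt using assms by (intro arg_cong2[where f="(/)"] sum.cong) auto

lemma symm_scale: "symm (\<lambda>ys. c * T ys) xs = c * symm T xs"
  unfolding symm_alt by (simp add: sum_distrib_left)

lemma symm_add: "symm (\<lambda>ys. T ys + U ys) xs = symm T xs + symm U xs"
  unfolding symm_alt by (simp add: sum.distrib add_divide_distrib)

lemma symm_sum: "symm (\<lambda>ys. \<Sum>i\<in>I. T i ys) xs = (\<Sum>i\<in>I. symm (T i) xs)"
  unfolding symm_alt by (simp add: sum_divide_distrib[symmetric] sum.swap[of _ I])

definition ins :: "nat \<Rightarrow> 'a \<Rightarrow> 'a list \<Rightarrow> 'a list" where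
  "ins j c zs = take j zs @ c # drop j zs"

definition sig :: "nat \<Rightarrow> nat \<Rightarrow> nat \<Rightarrow> nat" where
  "sig k j i = (if i < j then i else if i = j then k else if i \<le> k then i - 1 else i)"

definition rho :: "nat \<Rightarrow> nat \<Rightarrow> nat \<Rightarrow> nat" where
  "rho k j i = (if i < j then i else if i = k then j else if i < k then i + 1 else i)"

lemma sig_rho: "j \<le> k \<Longrightarrow> sig k j (rho k j i) = i"
  by (auto simp: sig_def rho_def)

lemma rho_sig: "j \<le> k \<Longrightarrow> rho k j (sig k j i) = i"
  by (auto simp: sig_def rho_def)

lemma sig_permutes: "j \<le> k \<Longrightarrow> sig k j permutes {..<Suc k}"
  apply (rule bij_imp_permutes)
   apply (rule bij_betw_byWitness[where f'="rho k j"])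
  by (auto simp: sig_rho rho_sig) (auto simp: sig_def rho_def)

lemma rho_permutes: "j \<le> k \<Longrightarrow> rho k j permutes {..<Suc k}"
  apply (rule bij_imp_permutes)
   apply (rule bij_betw_byWitness[where f'="sig k j"])
  by (auto simp: sig_rho rho_sig) (auto simp: sig_def rho_def)

lemma permute_sig: "length zs = k \<Longrightarrow> j \<le> k \<Longrightarrow> permute_list (sig k j) (zs @ [c]) = ins j c zs"
  apply (rule nth_equalityI)
   apply (simp add: ins_def)
  apply (subst permute_list_nth)
  using sig_permutes apply simp
   apply simp
  apply (auto simp: sig_def ins_def nth_append min_def)
  done

lemma permute_append_fix:
  assumes "q permutes {..<length zs}"
  shows "permute_list q (zs @ ys) = permute_list q zs @ ys"
  apply (rule nth_equalityI)
   apply simp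
  using permutes_in_image[OF assms] permutes_not_in[OF assms]
  by (auto simp: permute_list_def nth_append)

lemma symm_ins:
  assumes "length zs = k"
  shows "symm T (zs @ [c]) = (\<Sum>j\<le>k. symm (\<lambda>ys. T (ins j c ys)) zs) / real (Suc k)"
proof -
  let ?S = "{p. p permutes {..<Suc k}}"
  let ?Q = "{q. q permutes {..<k}}"
  have "(\<Sum>p\<in>?S. T (permute_list p (zs @ [c])))
       = (\<Sum>(j,q)\<in>{..k} \<times> ?Q. T (permute_list (q \<circ> sig k j) (zs @ [c])))"
  proof (rule sum.reindex_bij_witness[where i="\<lambda>(j,q). q \<circ> sig k j"
        and j="\<lambda>p. (inv p k, p \<circ> rho k (inv p k))"])
    fix p assume p: "p \<in> ?S"
    then have pp: "p permutes {..<Suc k}" by simp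
    have "inv p k < Suc k" using permutes_in_image[OF permutes_inv[OF pp], of k] by simp
    then have ik: "inv p k \<le> k" by simp
    show "(case (inv p k, p \<circ> rho k (inv p k)) of (j, q) \<Rightarrow> q \<circ> sig k j) = p"
      using ik by (auto simp: fun_eq_iff rho_sig)
    have P1: "p \<circ> rho k (inv p k) permutes {..<Suc k}"
      using permutes_compose[OF rho_permutes[OF ik] pp] .
    have kk: "(p \<circ> rho k (inv p k)) k = k"
      using ik by (simp add: rho_def permutes_inverses[OF pp])
    have X: "\<And>x. x \<in> {..<Suc k} - {..<k} \<Longrightarrow> (p \<circ> rho k (inv p k)) x = x"
    proof -
      fix x assume "x \<in> {..<Suc k} - {..<k}"
      then have "x = k" by auto
      then show "(p \<circ> rho k (inv p k)) x = x" using kk by simp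
    qed
    have "p \<circ> rho k (inv p k) permutes {..<k}"
      using permutes_superset[OF P1 X] .
    then show "(inv p k, p \<circ> rho k (inv p k)) \<in> {..k} \<times> ?Q" using ik by simp
    show "(case (inv p k, p \<circ> rho k (inv p k)) of (j, q) \<Rightarrow> T (permute_list (q \<circ> sig k j) (zs @ [c])))
        = T (permute_list p (zs @ [c]))"
      using ik by (simp add: comp_assoc[symmetric] fun_eq_iff rho_sig o_def)
  next
    fix b assume b: "b \<in> {..k} \<times> ?Q"
    then obtain j q where bj: "b = (j,q)" "j \<le> k" "q permutes {..<k}" by auto
    have qs: "q permutes {..<Suc k}" by (rule permutes_subset[OF bj(3)]) auto
    have qk: "q k = k" using permutes_not_in[OF bj(3)] by simp
    have pj: "(q \<circ> sig k j) j = k" by (simp add: sig_def qk)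
    have pp: "q \<circ> sig k j permutes {..<Suc k}"
      using permutes_compose[OF sig_permutes[OF bj(2)] qs] .
    have iv: "inv (q \<circ> sig k j) k = j"
      using pj permutes_inv_eq[OF pp] by blast
    show "(\<lambda>p. (inv p k, p \<circ> rho k (inv p k))) (case b of (j, q) \<Rightarrow> q \<circ> sig k j) = b"
      using bj iv by (auto simp: fun_eq_iff sig_rho)
    show "(case b of (j, q) \<Rightarrow> q \<circ> sig k j) \<in> ?S" using bj pp by simp
  qed
  also have "\<dots> = (\<Sum>j\<le>k. \<Sum>q\<in>?Q. T (ins j c (permute_list q zs)))"
    unfolding sum.cartesian_product[symmetric]
  proof (intro sum.cong refl)
    fix j q assume "j \<in> {..k}" "q \<in> ?Q"
    then have j: "j \<le> k" and q: "q permutes {..<length zs}" using assms by auto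
    have "permute_list (q \<circ> sig k j) (zs @ [c]) = permute_list (sig k j) (permute_list q (zs @ [c]))"
      using sig_permutes[OF j] assms by (intro permute_list_compose) simp
    also have "\<dots> = ins j c (permute_list q zs)"
      using permute_append_fix[OF q] permute_sig[of "permute_list q zs" k j c] j assms by simp
    finally show "T (permute_list (q \<circ> sig k j) (zs @ [c])) = T (ins j c (permute_list q zs))" by simp
  qed
  finally show ?thesis
    using assms by (simp add: symm_alt sum_divide_distrib mult.commute)
qed


lemma prod_nth_drop: "(\<Prod>j\<in>{a..<length L}. f (L ! j)) = prod_list (map f (drop a L))"
proof (induction L arbitrary: a)
  case Nil then show ?case by simp
next
  case (Cons x L)
  show ?case
  proof (cases a)
    case 0
    have "(\<Prod>j\<in>{0..<length (x#L)}. f ((x#L) ! j)) = f x * (\<Prod>j\<in>{0..<length L}. f (L ! j))"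
      by (simp only: length_Cons prod.atLeast0_lessThan_Suc_shift) simp
    then show ?thesis using Cons.IH[of 0] 0 by simp
  next
    case (Suc a')
    have "(\<Prod>j\<in>{Suc a'..<Suc (length L)}. f ((x#L) ! j)) = (\<Prod>j\<in>{a'..<length L}. f (L ! j))"
      by (simp only: prod.shift_bounds_Suc_ivl nth_Cons_Suc)
    then show ?thesis using Cons.IH[of a'] Suc by simp
  qed
qed

lemma len2: "2 \<le> length L \<Longrightarrow> \<exists>a b L'. L = a # b # L'"
  by (cases L; cases "tl L") auto

lemma gmuT_alt: "gmuT s mu L = gprod s L * prod_list (map (raise mu) (drop (2 * s) L))"
  unfolding gmuT_def by (simp add: prod_nth_drop)

lemma gprod_0[simp]: "gprod 0 L = 1"
  by (simp add: gprod_def)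

lemma gprod_Suc: "gprod (Suc s) (a#b#L) = gm a b * gprod s L"
  unfolding gprod_def prod.lessThan_Suc_shift by simp

fun gmu :: "nat \<Rightarrow> real^4 \<Rightarrow> 4 list \<Rightarrow> real" where
  "gmu 0 mu L = prod_list (map (raise mu) L)"
| "gmu (Suc s) mu (a#b#L) = gm a b * gmu s mu L"
| "gmu (Suc s) mu _ = 0"

lemma gmuT_gmu: "2 * s \<le> length L \<Longrightarrow> gmuT s mu L = gmu s mu L"
proof (induction s arbitrary: L)
  case 0 then show ?case by (simp add: gmuT_alt)
next
  case (Suc s)
  then obtain a b L' where L: "L = a#b#L'"
    using len2[of L] by auto
  then have "2 * s \<le> length L'" using Suc.prems by simp
  then show ?case using Suc.IH[of L'] L by (simp add: gmuT_alt gprod_Suc)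
qed

lemma gm_sym: "gm a b = gm b a"
  by (simp add: gm_def)

lemma raise_alt: "raise mu a = (\<Sum>b\<in>UNIV. gm b a * mu $ b)"
  by (simp add: raise_def gm_sym)

fun Rf :: "real^4 \<Rightarrow> nat \<Rightarrow> nat \<Rightarrow> 4 list \<Rightarrow> real" where
  "Rf mu 0 (Suc s) (a#L) = raise mu a * gmu s mu L"
| "Rf mu (Suc i) (Suc s) (a#b#L) = gm a b * Rf mu i s L"
| "Rf mu _ _ _ = 0"

lemma ins_0[simp]: "ins 0 c L = c # L"
  by (simp add: ins_def)
lemma ins_Cons: "ins (Suc j) c (a#L) = a # ins j c L"
  by (simp add: ins_def)

lemma H_high:
  "2 * s \<le> j \<Longrightarrow> j \<le> length L \<Longrightarrow> (\<Sum>c\<in>UNIV. gmu s mu (ins j c L) * mu $ c) = mdot mu * gmu s mu L"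
proof (induction s arbitrary: j L)
  case 0
  have "gmu 0 mu (ins j c L) = raise mu c * gmu 0 mu L" for c
  proof -
    have "prod_list (map (raise mu) (take j L)) * prod_list (map (raise mu) (drop j L)) = prod_list (map (raise mu) L)"
      by (metis append_take_drop_id map_append prod_list.append)
    then show ?thesis by (simp add: ins_def mult_ac)
  qed
  then show ?case
    by (simp add: mdot_def sum_distrib_right sum_distrib_left mult_ac)
next
  case (Suc s)
  then obtain a b L' where L: "L = a#b#L'"
    using len2[of L] by auto
  have "\<exists>j'. j = Suc (Suc j')" using Suc.prems(1) by presburger
  then obtain j' where j: "j = Suc (Suc j')" by blast

  have "gmu (Suc s) mu (ins j c L) = gm a b * gmu s mu (ins j' c L')" for c
    using L j by (simp add: ins_Cons)
  then have "(\<Sum>c\<in>UNIV. gmu (Suc s) mu (ins j c L) * mu $ c) = gm a b * (\<Sum>c\<in>UNIV. gmu s mu (ins j' c L') * mu $ c)"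
    by (simp add: sum_distrib_left mult_ac)
  also have "\<dots> = gm a b * (mdot mu * gmu s mu L')"
    using Suc.IH[of j' L'] Suc.prems L j by simp
  finally show ?case using L by simp
qed

lemma H_low:
  "j < 2 * s \<Longrightarrow> 2 * s \<le> Suc (length L) \<Longrightarrow> (\<Sum>c\<in>UNIV. gmu s mu (ins j c L) * mu $ c) = Rf mu (j div 2) s L"
proof (induction s arbitrary: j L)
  case 0 then show ?case by simp
next
  case (Suc s)
  show ?case
  proof (cases "j < 2")
    case True
    obtain a L' where L: "L = a#L'" using Suc.prems by (cases L) auto
    have "(\<Sum>c\<in>UNIV. gmu (Suc s) mu (ins j c L) * mu $ c) = raise mu a * gmu s mu L'"
    proof (cases "j = 0")
      case True
      then show ?thesis using L
        by (simp add: raise_alt sum_distrib_right sum_distrib_left mult_ac)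
    next
      case False
      then have "j = 1" using \<open>j < 2\<close> by simp
      then show ?thesis using L
        by (simp add: ins_Cons raise_def sum_distrib_right sum_distrib_left mult_ac)
    qed
    then show ?thesis using True L by simp
  next
    case False
    then obtain a b L' where L: "L = a#b#L'" using Suc.prems len2[of L] by auto
    have "\<exists>j'. j = Suc (Suc j')" using False by presburger
    then obtain j' where j: "j = Suc (Suc j')" by blast
    have "gmu (Suc s) mu (ins j c L) = gm a b * gmu s mu (ins j' c L')" for c
      using L j by (simp add: ins_Cons)
    then have "(\<Sum>c\<in>UNIV. gmu (Suc s) mu (ins j c L) * mu $ c) = gm a b * (\<Sum>c\<in>UNIV. gmu s mu (ins j' c L') * mu $ c)"
      by (simp add: sum_distrib_left mult_ac)
    also have "\<dots> = gm a b * Rf mu (j' div 2) s L'"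
    proof -
      have "j' < 2 * s" "2 * s \<le> Suc (length L')" using Suc.prems L j by auto
      then show ?thesis using Suc.IH[of j' L'] by simp
    qed
    also have "\<dots> = Rf mu (j div 2) (Suc s) L"
    proof -
      have "j div 2 = Suc (j' div 2)" using j by simp
      then show ?thesis using L by simp
    qed
    finally show ?thesis .
  qed
qed


lemma transpose_Suc: "Transposition.transpose (Suc a) (Suc b) (Suc i) = Suc (Transposition.transpose a b i)"
  by (simp add: Transposition.transpose_def)

lemma transpose_Suc0: "Transposition.transpose (Suc a) (Suc b) 0 = 0"
  by (simp add: Transposition.transpose_def)

lemma sw_Cons: "permute_list (Transposition.transpose (Suc a) (Suc b)) (x # L) = x # permute_list (Transposition.transpose a b) L"
  apply (rule nth_equalityI)
   apply simp
  subgoal for i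
    by (cases i) (auto simp: permute_list_def transpose_Suc transpose_Suc0 simp del: upt_Suc)
  done

lemma sw_base: "permute_list (Transposition.transpose 0 2) (a # b # c # L) = c # b # a # L"
  apply (rule nth_equalityI)
   apply simp
  subgoal for i
    by (auto simp: permute_list_def Transposition.transpose_def nth_Cons' simp del: upt_Suc)
  done

lemma sw_base': "permute_list (Transposition.transpose 0 (Suc (Suc 0))) (a # b # c # L) = c # b # a # L"
  using sw_base by (simp add: numeral_2_eq_2)

lemma Rf_top: "2 * s < length L \<Longrightarrow> Rf mu s (Suc s) L = gmu s mu L"
proof (induction s arbitrary: L)
  case 0
  then obtain a L' where "L = a # L'" by (cases L) auto
  then show ?case by simp
next
  case (Suc s)
  then obtain a b L' where L: "L = a#b#L'" using len2[of L] by auto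
  then show ?case using Suc by simp
qed

lemma Rf_swap: "Suc i < s \<Longrightarrow> 2 * s \<le> Suc (length L) \<Longrightarrow>
   Rf mu i s (permute_list (Transposition.transpose (2 * i) (2 * i + 2)) L) = Rf mu (Suc i) s L"
proof (induction i arbitrary: s L)
  case 0
  then obtain s' where s: "s = Suc (Suc s')" by (cases s; cases "s - 1") auto
  have "3 \<le> length L" using 0 by simp
  then obtain a b c L' where L: "L = a#b#c#L'"
    by (cases L; cases "tl L"; cases "tl (tl L)") auto
  show ?case using s L by (simp add: sw_base' gm_sym)
next
  case (Suc i)
  then obtain s' where s: "s = Suc s'" by (cases s) auto
  have "2 \<le> length L" using Suc.prems by simp
  then obtain a b L' where L: "L = a#b#L'" using len2[of L] by auto
  have e: "permute_list (Transposition.transpose (2 * Suc i) (2 * Suc i + 2)) L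
      = a # b # permute_list (Transposition.transpose (2 * i) (2 * i + 2)) L'"
  proof -
    have t: "Transposition.transpose (2 * Suc i) (2 * Suc i + 2) = Transposition.transpose (Suc (Suc (2 * i))) (Suc (Suc (2 * i + 2)))"
      by simp
    show ?thesis unfolding L t by (simp only: sw_Cons)
  qed
  show ?case using Suc.IH[of s' L'] Suc.prems s L e by simp
qed

lemma symm_Rf: "i < s \<Longrightarrow> 2 * s \<le> Suc (length xs) \<Longrightarrow> symm (Rf mu i s) xs = symm (gmu (s - 1) mu) xs"
proof (induction "s - 1 - i" arbitrary: i)
  case 0
  then obtain s' where s: "s = Suc s'" and i: "i = s'" by (cases s) auto
  have "symm (Rf mu i s) xs = symm (gmu s' mu) xs"
  proof (rule symm_cong)
    fix ys :: "4 list" assume "length ys = length xs"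
    then have "2 * s' < length ys" using 0 s by simp
    then show "Rf mu i s ys = gmu s' mu ys" using Rf_top s i by simp
  qed
  then show ?case using s by simp
next
  case (Suc d)
  have "symm (Rf mu (Suc i) s) xs = symm (Rf mu i s) xs"
  proof (rule symm_right)
    show "Transposition.transpose (2 * i) (2 * i + 2) permutes {..<length xs}"
      using Suc by (intro permutes_swap_id) auto
    show "Rf mu (Suc i) s ys = Rf mu i s (permute_list (Transposition.transpose (2 * i) (2 * i + 2)) ys)"
      if "length ys = length xs" for ys
      using Rf_swap[of i s ys mu] Suc that by simp
  qed
  moreover have "symm (Rf mu (Suc i) s) xs = symm (gmu (s - 1) mu) xs"
    using Suc by (intro Suc.hyps) auto
  ultimately show ?case by simp
qed

lemma symm_scale_r: "symm (\<lambda>ys. T ys * c) xs = symm T xs * c"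
  unfolding symm_alt by (simp add: sum_distrib_right)

lemma contract:
  assumes "length xs = k" "2 * s \<le> Suc k"
  shows "(\<Sum>c\<in>UNIV. symm (gmu s mu) (xs @ [c]) * mu $ c)
    = (real (Suc k - 2 * s) * mdot mu * symm (gmu s mu) xs + real (2 * s) * symm (gmu (s - 1) mu) xs) / real (Suc k)"
proof -
  let ?G = "gmu s mu"
  let ?H = "\<lambda>j ys. \<Sum>c\<in>UNIV. ?G (ins j c ys) * mu $ c"
  have "(\<Sum>c\<in>UNIV. symm ?G (xs @ [c]) * mu $ c)
      = (\<Sum>c\<in>UNIV. (\<Sum>j\<le>k. symm (\<lambda>ys. ?G (ins j c ys)) xs) / real (Suc k) * mu $ c)"
    using symm_ins[OF assms(1)] by simp
  also have "\<dots> = (\<Sum>c\<in>UNIV. \<Sum>j\<le>k. symm (\<lambda>ys. ?G (ins j c ys)) xs * mu $ c / real (Suc k))"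
    by (simp add: sum_divide_distrib sum_distrib_right)
  also have "\<dots> = (\<Sum>j\<le>k. \<Sum>c\<in>UNIV. symm (\<lambda>ys. ?G (ins j c ys)) xs * mu $ c / real (Suc k))"
    by (rule sum.swap)
  also have "\<dots> = (\<Sum>j\<le>k. \<Sum>c\<in>UNIV. symm (\<lambda>ys. ?G (ins j c ys)) xs * mu $ c) / real (Suc k)"
    by (simp add: sum_divide_distrib)
  also have "\<dots> = (\<Sum>j\<le>k. symm (?H j) xs) / real (Suc k)"
    by (simp add: symm_sum symm_scale_r)
  also have "(\<Sum>j\<le>k. symm (?H j) xs) = (\<Sum>j\<in>{0..<2 * s}. symm (?H j) xs) + (\<Sum>j\<in>{2 * s..<Suc k}. symm (?H j) xs)"
  proof -
    have e: "{..k} = {0..<Suc k}" by auto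
    show ?thesis unfolding e
      by (rule sum.atLeastLessThan_concat[symmetric]) (use assms in auto)
  qed
  also have "(\<Sum>j\<in>{0..<2 * s}. symm (?H j) xs) = (\<Sum>j\<in>{0..<2 * s}. symm (gmu (s - 1) mu) xs)"
  proof (rule sum.cong[OF refl])
    fix j assume j: "j \<in> {0..<2 * s}"
    have "symm (?H j) xs = symm (Rf mu (j div 2) s) xs"
      by (rule symm_cong) (use j assms in \<open>auto intro!: H_low\<close>)
    also have "\<dots> = symm (gmu (s - 1) mu) xs"
      using j assms by (intro symm_Rf) auto
    finally show "symm (?H j) xs = symm (gmu (s - 1) mu) xs" .
  qed
  also have "(\<Sum>j\<in>{2 * s..<Suc k}. symm (?H j) xs) = (\<Sum>j\<in>{2 * s..<Suc k}. mdot mu * symm ?G xs)"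
  proof (rule sum.cong[OF refl])
    fix j assume j: "j \<in> {2 * s..<Suc k}"
    have "symm (?H j) xs = symm (\<lambda>ys. mdot mu * ?G ys) xs"
      by (rule symm_cong) (use j assms in \<open>auto intro!: H_high\<close>)
    then show "symm (?H j) xs = mdot mu * symm ?G xs" by (simp add: symm_scale)
  qed
  finally show ?thesis using assms by (simp add: algebra_simps of_nat_diff)
qed


definition psi :: "nat \<Rightarrow> nat \<Rightarrow> nat \<Rightarrow> real \<Rightarrow> real" where
  "psi n r s x = (if 2 * s \<le> n - r \<and> n div 2 \<le> s + r then
     fact r * fact (n - r) / (real (dfact (2 * s + 2 * r - n)) * real (dfact (2 * s)) * fact (n - r - 2 * s) * real (dfact (n - 1)))
       * x ^ (s + r - n div 2) else 0)"

lemma dfact_pos: "dfact k > 0"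
  by (induction k rule: dfact.induct) auto

abbreviation LHSc where "LHSc n r t x \<equiv> psi n r t x * real (n - r - 2 * t) * x / real (n - r) + psi n r (Suc t) x * real (2 * Suc t) / real (n - r)"

lemma case_iii:
  assumes n': "n = 2 * (t + r + 1)"
  shows "LHSc n r t x = psi n (Suc r) t x"
proof -
  have D: "real (dfact (n - 1)) > 0" using dfact_pos by simp
  have e: "2 * real (dfact (2 * t)) + 2 * real t * real (dfact (2 * t)) = (2 + 2 * real t) * real (dfact (2 * t))"
    by (simp add: algebra_simps)
  have nz: "2 + 2 * real t \<noteq> 0" "1 + (real r + 2 * real t) \<noteq> 0" by linarith+
  show ?thesis unfolding psi_def n' using D n' nz dfact_pos[of "2*t"]
    apply (simp add: dfact_pos)
    apply (subst e)
    apply (rule frac_eq_eq[THEN iffD2])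
      apply (simp add: dfact_pos)
     apply (simp add: dfact_pos)
    apply (simp add: algebra_simps)
    done
qed

lemma case_iv0:
  assumes n: "n = 2 * (t + d + 1)" and rr: "r = 2 * d + 1"
  shows "LHSc n r t x = psi n (Suc r) t x"
proof -
  have D: "real (dfact (n - 1)) > 0" using dfact_pos by simp
  show ?thesis unfolding psi_def n rr using D
    apply (simp add: dfact_pos del: fact_Suc dfact.simps(3))
    apply (simp only: fact_Suc dfact.simps(3) of_nat_mult)
    apply (rule frac_eq_eq[THEN iffD2])
      apply (simp add: dfact_pos del: of_nat_Suc)
     apply (simp add: dfact_pos del: of_nat_Suc)
    apply (simp add: algebra_simps)
    done
qed

lemma alg_ivS:
  fixes fr FK1 Q P Dd FB y x Kr c1 c2 dd tt :: real
  assumes "fr \<noteq> 0" "FK1 \<noteq> 0" "Q \<noteq> 0" "P \<noteq> 0" "Dd \<noteq> 0" "FB \<noteq> 0" "Kr \<noteq> 0" "c1 \<noteq> 0" "c2 \<noteq> 0" "dd \<noteq> 0" "tt \<noteq> 0"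
  shows "fr * (Kr * FK1) / (Q * P * (c2 * c1 * FB) * Dd) * y * c2 * x / Kr
     + fr * (Kr * FK1) / ((dd * Q) * (tt * P) * FB * Dd) * (y * x) * tt / Kr
     = ((dd + c1) * fr) * FK1 / ((dd * Q) * P * (c1 * FB) * Dd) * (y * x)"
  using assms by (simp add: field_simps)

lemma case_ivS:
  assumes nn: "n = 2 * (t + d + b' + 2)" and r2: "r = 2 * d + b' + 2"
  shows "LHSc n r t x = psi n (Suc r) t x"
proof -
  define K where "K = 2 * t + b' + 2"
  have nr: "n - r = K" using nn r2 K_def by simp
  define Z where "Z = fact r * fact (Suc (2 * t + b')) / (real (dfact (2 * d)) * real (dfact (2 * t)) * fact b' * real (dfact (n - 1))) * x ^ Suc d"
  have V1: "psi n r t x = fact r * fact K / (real (dfact (2 * d)) * real (dfact (2 * t)) * fact (b' + 2) * real (dfact (n - 1))) * x ^ d"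
  proof -
    have c: "(2 * t \<le> K \<and> n div 2 \<le> t + r) = True" using nn r2 K_def by simp
    have a1: "2 * t + 2 * r - n = 2 * d" using nn r2 by simp
    have a2: "n - r = K" using nn r2 K_def by simp
    have a3: "K - 2 * t = b' + 2" using K_def by simp
    have a4: "t + r - n div 2 = d" using nn r2 by simp
    show ?thesis unfolding psi_def by (simp only: c a1 a2 a3 a4 if_True)
  qed
  have V2: "psi n r (Suc t) x = fact r * fact K / (real (dfact (2 * d + 2)) * real (dfact (2 * Suc t)) * fact b' * real (dfact (n - 1))) * x ^ Suc d"
  proof -
    have c: "(2 * Suc t \<le> K \<and> n div 2 \<le> Suc t + r) = True" using nn r2 K_def by simp
    have a1: "2 * Suc t + 2 * r - n = 2 * d + 2" using nn r2 by simp
    have a2: "n - r = K" using nn r2 K_def by simp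
    have a3: "K - 2 * Suc t = b'" using K_def by simp
    have a4: "Suc t + r - n div 2 = Suc d" using nn r2 by simp
    have a5: "2 * Suc t = 2 * t + 2" by simp
    show ?thesis unfolding psi_def by (simp only: c a1 a2 a3 a4 if_True)
  qed
  have V3: "psi n (Suc r) t x = fact (Suc r) * fact (Suc (2 * t + b')) / (real (dfact (2 * d + 2)) * real (dfact (2 * t)) * fact (b' + 1) * real (dfact (n - 1))) * x ^ Suc d"
  proof -
    have c: "(2 * t \<le> Suc (2 * t + b') \<and> n div 2 \<le> t + Suc r) = True" using nn r2 by simp
    have a1: "2 * t + 2 * Suc r - n = 2 * d + 2" using nn r2 by simp
    have a2: "n - Suc r = Suc (2 * t + b')" using nn r2 by simp
    have a3: "Suc (2 * t + b') - 2 * t = b' + 1" by simp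
    have a4: "t + Suc r - n div 2 = Suc d" using nn r2 by simp
    show ?thesis unfolding psi_def by (simp only: c a1 a2 a3 a4 if_True)
  qed
  have eqs: "fact K = real K * (fact (Suc (2 * t + b')) :: real)"
    "fact (b' + 2) = (real b' + 2) * (real b' + 1) * (fact b' :: real)"
    "real (dfact (2 * d + 2)) = (2 * real d + 2) * real (dfact (2 * d))"
    "real (dfact (2 * Suc t)) = (2 * real t + 2) * real (dfact (2 * t))"
    "fact (Suc r) = (real r + 1) * (fact r :: real)"
    "fact (b' + 1) = (real b' + 1) * (fact b' :: real)"
    "x ^ Suc d = x ^ d * x"
    "real (n - r - 2 * t) = real b' + 2"
    "real (n - r) = real K"
    "real (2 * Suc t) = 2 * real t + 2"
    "real r + 1 = (2 * real d + 2) + (real b' + 1)"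
    using nr K_def r2 by (simp_all add: algebra_simps)
  have pos: "real (dfact (2 * d)) \<noteq> 0" "real (dfact (2 * t)) \<noteq> 0" "real (dfact (n - 1)) \<noteq> 0"
    "fact b' \<noteq> (0::real)" "fact r \<noteq> (0::real)" "fact (Suc (2 * t + b')) \<noteq> (0::real)"
    "real K \<noteq> 0" "real b' + 1 \<noteq> 0" "real b' + 2 \<noteq> 0" "2 * real d + 2 \<noteq> 0" "2 * real t + 2 \<noteq> 0"
    using dfact_pos K_def by auto
  show ?thesis
    unfolding V1 V2 V3
    apply (simp only: eqs)
    apply (rule alg_ivS)
    using pos by auto
qed

lemma coef_rec:
  assumes "even n" "Suc r \<le> n"
  shows "LHSc n r t x = psi n (Suc r) t x"
proof -
  obtain m where n: "n = 2 * m" using assms(1) by blast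
  consider (i) "n - r \<le> 2 * t" | (ii) "t + r + 1 < m" | (iii) "m = t + r + 1" "2 * t < n - r"
    | (iv) "m \<le> t + r" "2 * t < n - r"
    by linarith
  then show ?thesis
  proof cases
    case i
    then show ?thesis unfolding psi_def using assms n by auto
  next
    case ii
    then show ?thesis unfolding psi_def using assms n by auto
  next
    case iii
    then have n': "n = 2 * (t + r + 1)" using n by simp
    then show ?thesis by (rule case_iii)
  next
    case iv
    then obtain d b where rr: "r = 2 * d + b + 1" and mm: "m = t + d + b + 1"
    proof -
      have "r = 2 * (t + r - m) + (2 * m - r - 1 - 2 * t) + 1 \<and> m = t + (t + r - m) + (2 * m - r - 1 - 2 * t) + 1"
        using iv n by linarith
      then show ?thesis using that by blast
    qed
    show ?thesis
    proof (cases b)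
      case 0
      show ?thesis by (rule case_iv0) (use n mm rr 0 in auto)
    next
      case (Suc b')
      show ?thesis by (rule case_ivS) (use n mm rr Suc in auto)
    qed
  qed
qed

lemma dfact_fact_Suc: "real (dfact (Suc k)) * real (dfact k) = fact (Suc k)"
proof (induction k)
  case 0 then show ?case by simp
next
  case (Suc k)
  have "real (dfact (Suc (Suc k))) * real (dfact (Suc k)) = real (Suc (Suc k)) * (real (dfact (Suc k)) * real (dfact k))"
    by (simp add: algebra_simps)
  also have "\<dots> = real (Suc (Suc k)) * fact (Suc k)" using Suc by simp
  finally show ?case by simp
qed

lemma dfact_fact: "real (dfact n) * real (dfact (n - 1)) = fact n"
  using dfact_fact_Suc[of "n - 1"] by (cases n) auto

lemma psi_base: "even n \<Longrightarrow> psi n 0 s x = (if s = n div 2 then 1 else 0)"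
  using dfact_fact[of n] dfact_pos[of n] dfact_pos[of "n - 1"]
  by (auto simp: psi_def field_simps)

lemma phicoef_psi:
  assumes "even n" "r \<le> n" "s \<le> (n - r) div 2"
  shows "phicoef n r s g = psi n r s (- (g ^ 2))"
proof (cases "r \<le> 1")
  case True
  show ?thesis
  proof (cases "r = 0")
    case True
    then show ?thesis using psi_base[OF assms(1)] by (simp add: phicoef_def)
  next
    case False
    then have r1: "r = 1" using \<open>r \<le> 1\<close> by simp
    obtain m where n: "n = 2 * m" using assms(1) by blast
    then have m: "m \<ge> 1" using assms r1 by simp
    have "(n - r) div 2 = m - 1" using n r1 m by simp
    show ?thesis
    proof (cases "s = m - 1")
      case True
      have "psi n r s (- (g ^ 2)) = 1"
      proof -
        have c: "(2 * s \<le> n - r \<and> n div 2 \<le> s + r) = True" using n r1 m True by simp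
        have a1: "2 * s + 2 * r - n = 0" using n r1 m True by simp
        have a3: "n - r - 2 * s = 1" using n r1 m True by simp
        have a4: "s + r - n div 2 = 0" using n r1 m True by simp
        have ff: "real (dfact (2 * s)) * real (dfact (n - r)) = fact (n - r)"
        proof -
          have "n - r - 1 = 2 * s" using n r1 m True by simp
          then show ?thesis using dfact_fact[of "n - r"] by (simp add: mult.commute)
        qed
        have "psi n r s (- (g ^ 2)) = fact r * fact (n - r) / (real (dfact 0) * real (dfact (2 * s)) * fact 1 * real (dfact (n - 1))) * (- (g ^ 2)) ^ 0"
          unfolding psi_def by (simp only: c a1 a3 a4 if_True)
        also have "\<dots> = 1"
          using ff dfact_pos[of "n - 1"] dfact_pos[of "2 * s"] r1 by simp
        finally show ?thesis .
      qed
      then show ?thesis using True r1 n m \<open>(n - r) div 2 = m - 1\<close> by (simp add: phicoef_def)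
    next
      case False
      then have "psi n r s (- (g ^ 2)) = 0" unfolding psi_def using n r1 m assms(3) \<open>(n - r) div 2 = m - 1\<close> by auto
      then show ?thesis using False r1 \<open>(n - r) div 2 = m - 1\<close> by (simp add: phicoef_def)
    qed
  qed
next
  case False
  have "2 * s \<le> n - r" using assms(3) by simp
  then show ?thesis using False unfolding phicoef_def psi_def by simp
qed


lemma lhsT_Suc: "lhsT n (Suc r) mu A = (\<Sum>c\<in>UNIV. mu $ c * lhsT n r mu (A @ [c]))"
proof -
  have "lhsT n (Suc r) mu A = (\<Sum>c\<in>UNIV. \<Sum>C\<in>{C. length C = r}.
      symm (gprod (n div 2)) (A @ c # C) * (\<Prod>j<Suc r. mu $ ((c # C) ! j)))"
    unfolding lhsT_def by (rule sum_len_Suc)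
  also have "\<dots> = (\<Sum>c\<in>UNIV. \<Sum>C\<in>{C. length C = r}.
      mu $ c * (symm (gprod (n div 2)) ((A @ [c]) @ C) * (\<Prod>j<r. mu $ (C ! j))))"
    unfolding prod.lessThan_Suc_shift by (simp add: mult_ac)
  also have "\<dots> = (\<Sum>c\<in>UNIV. mu $ c * lhsT n r mu (A @ [c]))"
    unfolding lhsT_def by (simp add: sum_distrib_left)
  finally show ?thesis .
qed

lemma lhsT_0:
  assumes "even n" "length A = n"
  shows "lhsT n 0 mu A = symm (gmu (n div 2) mu) A"
proof -
  have e: "{C::4 list. length C = 0} = {[]}" by auto
  have "lhsT n 0 mu A = symm (gprod (n div 2)) A" unfolding lhsT_def e by simp
  also have "\<dots> = symm (gmu (n div 2) mu) A"
  proof (rule symm_cong)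
    fix ys :: "4 list" assume "length ys = length A"
    then have l: "length ys = 2 * (n div 2)" using assms by simp
    then have "gprod (n div 2) ys = gmuT (n div 2) mu ys" by (simp add: gmuT_alt)
    also have "\<dots> = gmu (n div 2) mu ys" using l by (intro gmuT_gmu) simp
    finally show "gprod (n div 2) ys = gmu (n div 2) mu ys" .
  qed
  finally show ?thesis .
qed

lemma distr_helper: "(p::real) * ((u * x * g + v * h) / K) = p * u * x / K * g + p * v / K * h"
  by (cases "K = 0") (simp_all add: field_simps)

lemma psi_zero: "n - r < 2 * s \<Longrightarrow> psi n r s x = 0"
  by (simp add: psi_def)

lemma main_id:
  assumes "even n"
  shows "r \<le> n \<Longrightarrow> length A = n - r \<Longrightarrow>
    lhsT n r mu A = (\<Sum>s\<le>n. psi n r s (mdot mu) * symm (gmu s mu) A)"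
proof (induction r arbitrary: A)
  case 0
  have "(\<Sum>s\<le>n. psi n 0 s (mdot mu) * symm (gmu s mu) A)
      = (\<Sum>s\<le>n. if s = n div 2 then symm (gmu s mu) A else 0)"
    using psi_base[OF assms] by (intro sum.cong) auto
  also have "\<dots> = symm (gmu (n div 2) mu) A" by simp
  finally show ?case using lhsT_0[OF assms] 0 by simp
next
  case (Suc r)
  let ?x = "mdot mu"
  let ?G = "\<lambda>s. symm (gmu s mu) A"
  define k where "k = n - Suc r"
  have lA: "length A = k" using Suc k_def by simp
  have nr: "n - r = Suc k" using Suc.prems k_def by simp
  define a where "a = (\<lambda>s. psi n r s ?x * real (n - r - 2 * s) * ?x / real (n - r))"
  define b where "b = (\<lambda>s. psi n r s ?x * real (2 * s) / real (n - r))"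
  have "lhsT n (Suc r) mu A = (\<Sum>c\<in>UNIV. mu $ c * (\<Sum>s\<le>n. psi n r s ?x * symm (gmu s mu) (A @ [c])))"
    unfolding lhsT_Suc using Suc by (intro sum.cong refl) (subst Suc.IH, auto)
  also have "\<dots> = (\<Sum>s\<le>n. psi n r s ?x * (\<Sum>c\<in>UNIV. symm (gmu s mu) (A @ [c]) * mu $ c))"
    by (simp add: sum_distrib_left sum.swap[of _ UNIV] mult_ac)
  also have "\<dots> = (\<Sum>s\<le>n. a s * ?G s + b s * ?G (s - 1))"
  proof (rule sum.cong[OF refl])
    fix s assume "s \<in> {..n}"
    show "psi n r s ?x * (\<Sum>c\<in>UNIV. symm (gmu s mu) (A @ [c]) * mu $ c) = a s * ?G s + b s * ?G (s - 1)"
    proof (cases "2 * s \<le> Suc k")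
      case True
      show ?thesis unfolding contract[OF lA True] a_def b_def nr
        by (rule distr_helper)
    next
      case False
      then show ?thesis unfolding a_def b_def using psi_zero[of n r s] nr by simp
    qed
  qed
  also have "\<dots> = (\<Sum>s\<le>n. a s * ?G s) + (\<Sum>s\<le>n. b s * ?G (s - 1))"
    by (rule sum.distrib)
  also have "(\<Sum>s\<le>n. b s * ?G (s - 1)) = (\<Sum>t\<le>n. b (Suc t) * ?G t)"
  proof -
    have b0: "b 0 = 0" by (simp add: b_def)
    have bn: "b (Suc n) = 0" unfolding b_def using psi_zero[of n r "Suc n"] by simp
    have "(\<Sum>s\<le>n. b s * ?G (s - 1)) = (\<Sum>s\<le>Suc n. b s * ?G (s - 1))" using bn by simp
    also have "\<dots> = (\<Sum>t\<le>n. b (Suc t) * ?G t)" using b0 by (subst sum.atMost_Suc_shift) simp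
    finally show ?thesis .
  qed
  also have "(\<Sum>s\<le>n. a s * ?G s) + (\<Sum>t\<le>n. b (Suc t) * ?G t) = (\<Sum>t\<le>n. (a t + b (Suc t)) * ?G t)"
    by (simp add: sum.distrib algebra_simps)
  also have "\<dots> = (\<Sum>t\<le>n. psi n (Suc r) t ?x * ?G t)"
  proof (rule sum.cong[OF refl])
    fix t
    have "a t + b (Suc t) = psi n (Suc r) t ?x"
      unfolding a_def b_def using coef_rec[OF assms Suc.prems(1), of t ?x] by simp
    then show "(a t + b (Suc t)) * ?G t = psi n (Suc r) t ?x * ?G t" by simp
  qed
  finally show ?case .
qed

lemma gam_sq: "timelike mu \<Longrightarrow> mdot mu = - (gam mu ^ 2)"
  unfolding timelike_def gam_def by simp

lemma identity:
  assumes "even n" "r \<le> n" "timelike mu" "length A = n - r"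
  shows "lhsT n r mu A = (\<Sum>s = 0..(n - r) div 2. phicoef n r s (gam mu) * symm (gmuT s mu) A)"
proof -
  have "lhsT n r mu A = (\<Sum>s\<le>n. psi n r s (mdot mu) * symm (gmu s mu) A)"
    using main_id[OF assms(1,2,4)] .
  also have "\<dots> = (\<Sum>s = 0..(n - r) div 2. psi n r s (mdot mu) * symm (gmu s mu) A)"
  proof (rule sum.mono_neutral_right)
    show "finite {..n}" by simp
    show "{0..(n - r) div 2} \<subseteq> {..n}" by auto
    show "\<forall>i\<in>{..n} - {0..(n - r) div 2}. psi n r i (mdot mu) * symm (gmu i mu) A = 0"
      using psi_zero by auto
  qed
  also have "\<dots> = (\<Sum>s = 0..(n - r) div 2. phicoef n r s (gam mu) * symm (gmuT s mu) A)"
  proof (rule sum.cong[OF refl])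
    fix s assume s: "s \<in> {0..(n - r) div 2}"
    have "psi n r s (mdot mu) = phicoef n r s (gam mu)"
      using phicoef_psi[OF assms(1,2), of s "gam mu"] s gam_sq[OF assms(3)] by simp
    moreover have "symm (gmu s mu) A = symm (gmuT s mu) A"
      by (rule symm_cong) (use s assms(4) in \<open>auto intro!: gmuT_gmu[symmetric]\<close>)
    ultimately show "psi n r s (mdot mu) * symm (gmu s mu) A = phicoef n r s (gam mu) * symm (gmuT s mu) A"
      by simp
  qed
  finally show ?thesis .
qed


inductive pf :: "(real \<times> (real^4) \<Rightarrow> real) \<Rightarrow> bool" where
  pf_const: "pf (\<lambda>x. c)"
| pf_coord: "pf (\<lambda>x. snd x $ i)"
| pf_add: "pf f \<Longrightarrow> pf g \<Longrightarrow> pf (\<lambda>x. f x + g x)"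
| pf_mult: "pf f \<Longrightarrow> pf g \<Longrightarrow> pf (\<lambda>x. f x * g x)"

lemma pf_deriv: "pf f \<Longrightarrow> \<exists>D. (\<forall>x. (f has_derivative D x) (at x)) \<and> (\<forall>v. pf (\<lambda>x. D x v))"
proof (induction rule: pf.induct)
  case (pf_const c)
  show ?case by (rule exI[of _ "\<lambda>x h. 0"]) (auto intro: pf.pf_const)
next
  case (pf_coord i)
  have bl: "bounded_linear (\<lambda>h::real \<times> (real^4). snd h $ i)"
    by (rule bounded_linear_compose[OF bounded_linear_vec_nth bounded_linear_snd])
  show ?case
    by (rule exI[of _ "\<lambda>x h. snd h $ i"]) (auto intro: pf.pf_const bounded_linear_imp_has_derivative[OF bl])
next
  case (pf_add f g)
  then obtain Df Dg where f: "\<forall>x. (f has_derivative Df x) (at x)" "\<forall>v. pf (\<lambda>x. Df x v)"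
    and g: "\<forall>x. (g has_derivative Dg x) (at x)" "\<forall>v. pf (\<lambda>x. Dg x v)" by blast
  show ?case
    by (rule exI[of _ "\<lambda>x h. Df x h + Dg x h"]) (use f g in \<open>auto intro!: has_derivative_add pf.pf_add\<close>)
next
  case (pf_mult f g)
  then obtain Df Dg where f: "\<forall>x. (f has_derivative Df x) (at x)" "\<forall>v. pf (\<lambda>x. Df x v)"
    and g: "\<forall>x. (g has_derivative Dg x) (at x)" "\<forall>v. pf (\<lambda>x. Dg x v)" by blast
  show ?case
    by (rule exI[of _ "\<lambda>x h. f x * Dg x h + Df x h * g x"])
      (use f g pf_mult.hyps in \<open>auto intro!: has_derivative_mult pf.pf_add pf.pf_mult\<close>)
qed

lemma pf_Ck: "pf f \<Longrightarrow> Ck k U f"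
proof (induction k arbitrary: f)
  case 0
  then obtain D where D: "\<forall>x. (f has_derivative D x) (at x)" using pf_deriv by blast
  then show ?case
    by (auto intro!: continuous_at_imp_continuous_on has_derivative_continuous)
next
  case (Suc k)
  then obtain D where D: "\<forall>x. (f has_derivative D x) (at x)" "\<forall>v. pf (\<lambda>x. D x v)" using pf_deriv by blast
  have fd: "frechet_derivative f (at x) = D x" for x using frechet_derivative_at D(1) by metis
  show ?case using D Suc.IH unfolding Ck.simps fd
    by (auto simp: differentiable_def)
qed

lemma pf_sum: "finite I \<Longrightarrow> (\<And>i. i \<in> I \<Longrightarrow> pf (f i)) \<Longrightarrow> pf (\<lambda>x. \<Sum>i\<in>I. f i x)"
  by (induction I rule: finite_induct) (auto intro: pf.intros)

lemma pf_prod: "finite I \<Longrightarrow> (\<And>i. i \<in> I \<Longrightarrow> pf (f i)) \<Longrightarrow> pf (\<lambda>x. \<Prod>i\<in>I. f i x)"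
  by (induction I rule: finite_induct) (auto intro: pf.intros)

lemma pf_lhsT: "pf (\<lambda>p. lhsT n r (snd p) A)"
  unfolding lhsT_def
  by (intro pf_sum pf_prod pf_mult pf_const pf_coord finite_len) auto

lemma smooth_lhsT: "smooth_on U (\<lambda>p::real \<times> (real^4). lhsT n r (snd p) A)"
  unfolding smooth_on_def by (intro allI pf_Ck pf_lhsT)

lemma lhsT_sym:
  assumes "p permutes {..<length A}"
  shows "lhsT n r mu (permute_list p A) = lhsT n r mu A"
  unfolding lhsT_def
proof (intro sum.cong refl arg_cong2[where f="(*)"])
  fix C :: "4 list"
  have pp: "p permutes {..<length (A @ C)}" by (rule permutes_subset[OF assms]) auto
  have "symm (gprod (n div 2)) (permute_list p A @ C) = symm (gprod (n div 2)) (permute_list p (A @ C))"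
    using permute_append_fix[OF assms] by simp
  also have "\<dots> = symm (gprod (n div 2)) (A @ C)" by (rule symm_perm[OF pp])
  finally show "symm (gprod (n div 2)) (permute_list p A @ C) = symm (gprod (n div 2)) (A @ C)" .
qed

lemma tsym_lhsT: "tsym k (lhsT n r mu)"
  unfolding tsym_def using lhsT_sym by (metis permute_list_def)

lemma swap_last: "permute_list (Transposition.transpose (length A) (Suc (length A))) (A @ [c, b]) = A @ [b, c]"
  apply (rule nth_equalityI)
   apply simp
  subgoal for i
    by (auto simp: permute_list_def Transposition.transpose_def nth_append simp del: upt_Suc)
  done

lemma lhsT_swap_last: "lhsT n r mu (A @ [c, b]) = lhsT n r mu (A @ [b, c])"
proof -
  have "Transposition.transpose (length A) (Suc (length A)) permutes {..<length (A @ [c, b])}"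
    by (intro permutes_swap_id) auto
  from lhsT_sym[OF this, of n r mu] show ?thesis by (simp add: swap_last)
qed

lemma deriv_lhsT:
  fixes p :: "real \<times> (real^4)"
  shows "((\<lambda>p. lhsT n r (snd p) A) has_derivative
     (\<lambda>h. \<Sum>b\<in>UNIV. snd h $ b * (real r * lhsT n (r - 1) (snd p) (A @ [b])))) (at p)"
proof (induction r arbitrary: A)
  case 0
  have e: "(\<lambda>p. lhsT n 0 (snd p) A) = (\<lambda>p. lhsT n 0 0 A)"
    by (simp add: lhsT_def)
  show ?case unfolding e by simp
next
  case (Suc r)
  have bl: "bounded_linear (\<lambda>h::real \<times> (real^4). snd h $ i)" for i
    by (rule bounded_linear_compose[OF bounded_linear_vec_nth bounded_linear_snd])
  have e: "(\<lambda>p. lhsT n (Suc r) (snd p) A) = (\<lambda>p. \<Sum>c\<in>UNIV. snd p $ c * lhsT n r (snd p) (A @ [c]))"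
    by (simp add: lhsT_Suc)
  have "((\<lambda>p. \<Sum>c\<in>UNIV. snd p $ c * lhsT n r (snd p) (A @ [c])) has_derivative
      (\<lambda>h. \<Sum>c\<in>UNIV. snd p $ c * (\<Sum>b\<in>UNIV. snd h $ b * (real r * lhsT n (r - 1) (snd p) ((A @ [c]) @ [b])))
          + snd h $ c * lhsT n r (snd p) (A @ [c]))) (at p)"
    by (intro has_derivative_sum has_derivative_mult bounded_linear_imp_has_derivative[OF bl] Suc.IH)
  moreover have "(\<lambda>h::real \<times> (real^4). \<Sum>c\<in>UNIV. snd p $ c * (\<Sum>b\<in>UNIV. snd h $ b * (real r * lhsT n (r - 1) (snd p) ((A @ [c]) @ [b])))
          + snd h $ c * lhsT n r (snd p) (A @ [c]))
      = (\<lambda>h. \<Sum>b\<in>UNIV. snd h $ b * (real (Suc r) * lhsT n (Suc r - 1) (snd p) (A @ [b])))"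
  proof (rule ext)
    fix h :: "real \<times> (real^4)"
    have "(\<Sum>c\<in>UNIV. snd p $ c * (\<Sum>b\<in>UNIV. snd h $ b * (real r * lhsT n (r - 1) (snd p) ((A @ [c]) @ [b]))))
        = (\<Sum>b\<in>UNIV. snd h $ b * (real r * lhsT n r (snd p) (A @ [b])))"
    proof (cases r)
      case 0 then show ?thesis by simp
    next
      case (Suc r')
      have "(\<Sum>c\<in>UNIV. snd p $ c * (\<Sum>b\<in>UNIV. snd h $ b * (real r * lhsT n (r - 1) (snd p) ((A @ [c]) @ [b]))))
          = (\<Sum>b\<in>UNIV. snd h $ b * (real r * (\<Sum>c\<in>UNIV. snd p $ c * lhsT n r' (snd p) ((A @ [b]) @ [c]))))"
      proof -
        have "(\<Sum>c\<in>UNIV. snd p $ c * (\<Sum>b\<in>UNIV. snd h $ b * (real r * lhsT n (r - 1) (snd p) ((A @ [c]) @ [b]))))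
          = (\<Sum>c\<in>UNIV. \<Sum>b\<in>UNIV. snd h $ b * (real r * (snd p $ c * lhsT n r' (snd p) ((A @ [b]) @ [c]))))"
          using Suc lhsT_swap_last[of n r' "snd p" A] by (simp add: sum_distrib_left mult_ac)
        also have "\<dots> = (\<Sum>b\<in>UNIV. \<Sum>c\<in>UNIV. snd h $ b * (real r * (snd p $ c * lhsT n r' (snd p) ((A @ [b]) @ [c]))))"
          by (rule sum.swap)
        also have "\<dots> = (\<Sum>b\<in>UNIV. snd h $ b * (real r * (\<Sum>c\<in>UNIV. snd p $ c * lhsT n r' (snd p) ((A @ [b]) @ [c]))))"
          by (simp add: sum_distrib_left)
        finally show ?thesis .
      qed
      also have "\<dots> = (\<Sum>b\<in>UNIV. snd h $ b * (real r * lhsT n r (snd p) (A @ [b])))"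
        using Suc by (simp add: lhsT_Suc)
      finally show ?thesis .
    qed
    then show "(\<Sum>c\<in>UNIV. snd p $ c * (\<Sum>b\<in>UNIV. snd h $ b * (real r * lhsT n (r - 1) (snd p) ((A @ [c]) @ [b])))
          + snd h $ c * lhsT n r (snd p) (A @ [c]))
      = (\<Sum>b\<in>UNIV. snd h $ b * (real (Suc r) * lhsT n (Suc r - 1) (snd p) (A @ [b])))"
      by (simp add: sum.distrib algebra_simps)
  qed
  ultimately show ?case unfolding e by simp
qed

lemma dmu_lhsT: "dmu (\<lambda>lam mu A. lhsT n r mu A) lam mu A b = real r * lhsT n (r - 1) mu (A @ [b])"
proof -
  have "frechet_derivative (\<lambda>p. lhsT n r (snd p) A) (at (lam, mu))
      = (\<lambda>h. \<Sum>c\<in>UNIV. snd h $ c * (real r * lhsT n (r - 1) mu (A @ [c])))"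
    using frechet_derivative_at[OF deriv_lhsT[of n r A "(lam, mu)"]] by simp
  moreover have "(\<Sum>c\<in>UNIV. (axis b (1::real)) $ c * f c) = f b" for f :: "4 \<Rightarrow> real"
  proof -
    have "(axis b (1::real)) $ c * f c = (if c = b then f c else 0)" for c by (simp add: axis_def)
    then show ?thesis by simp
  qed
  ultimately show ?thesis unfolding dmu_def by simp
qed

lemma tsym_dmu:
  assumes "r \<le> n"
  shows "tsym (Suc (n - r)) (\<lambda>xs. dmu (\<lambda>lam mu A. lhsT n r mu A) lam mu (butlast xs) (last xs))"
  unfolding tsym_def
proof (intro allI impI)
  fix xs :: "4 list" and p
  assume l: "length xs = Suc (n - r)" and p: "p permutes {..<Suc (n - r)}"
  let ?ys = "map (\<lambda>i. xs ! p i) [0..<Suc (n - r)]"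
  have ys: "?ys = permute_list p xs" using l by (simp add: permute_list_def)
  have ne: "xs \<noteq> []" "?ys \<noteq> []" using l by auto
  have "lhsT n (r - 1) mu ?ys = lhsT n (r - 1) mu xs"
    unfolding ys by (rule lhsT_sym) (use p l in simp)
  then show "dmu (\<lambda>lam mu A. lhsT n r mu A) lam mu (butlast ?ys) (last ?ys)
      = dmu (\<lambda>lam mu A. lhsT n r mu A) lam mu (butlast xs) (last xs)"
    unfolding dmu_lhsT using ne by (simp add: append_butlast_last_id)
qed


definition TL :: "real^4^4 \<Rightarrow> nat \<Rightarrow> (4 list \<Rightarrow> real) \<Rightarrow> 4 list \<Rightarrow> real" where
  "TL L k T A = (\<Sum>B\<in>{B::4 list. length B = k}. (\<Prod>i<k. L $ (A ! i) $ (B ! i)) * T B)"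

definition Gm :: "real^4^4" where "Gm = (\<chi> i j. gm i j)"

lemma Gm_Gm: "Gm ** Gm = mat 1"
proof -
  have "(\<Sum>k\<in>UNIV. gm i k * gm k j) = (if i = j then 1 else 0)" for i j :: 4
  proof -
    have "(\<Sum>k\<in>UNIV. gm i k * gm k j) = (\<Sum>k\<in>UNIV. if k = i then gm i i * gm i j else 0)"
      by (intro sum.cong refl) (auto simp: gm_def)
    also have "\<dots> = gm i i * gm i j" by simp
    also have "\<dots> = (if i = j then 1 else 0)" by (auto simp: gm_def)
    finally show ?thesis .
  qed
  then show ?thesis
    by (simp add: matrix_matrix_mult_def mat_def Gm_def vec_eq_iff)
qed

lemma lorentz_mat:
  assumes "lorentz L"
  shows "transpose L ** Gm ** L = Gm"
proof -
  have "(transpose L ** Gm ** L) $ c $ d = Gm $ c $ d" for c d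
  proof -
    have "(transpose L ** Gm ** L) $ c $ d = (\<Sum>b\<in>UNIV. \<Sum>a\<in>UNIV. L $ a $ c * gm a b * L $ b $ d)"
      by (simp add: matrix_matrix_mult_def Gm_def transpose_def sum_distrib_right)
    also have "\<dots> = (\<Sum>a\<in>UNIV. \<Sum>b\<in>UNIV. L $ a $ c * gm a b * L $ b $ d)"
      by (rule sum.swap)
    also have "\<dots> = gm c d" using assms unfolding lorentz_def by (simp add: mult_ac)
    finally show ?thesis by (simp add: Gm_def)
  qed
  then show ?thesis by (simp add: vec_eq_iff)
qed

lemma lorentz_dual:
  assumes "lorentz L"
  shows "(\<Sum>e0\<in>UNIV. \<Sum>e1\<in>UNIV. L $ a0 $ e0 * L $ a1 $ e1 * gm e0 e1) = gm a0 a1"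
proof -
  let ?M = "Gm ** transpose L ** Gm"
  have "?M ** L = Gm ** (transpose L ** Gm ** L)" by (simp add: matrix_mul_assoc)
  also have "\<dots> = mat 1" using lorentz_mat[OF assms] Gm_Gm by simp
  finally have "L ** ?M = mat 1" using matrix_left_right_inverse by blast
  then have "(L ** ?M) ** Gm = Gm" by simp
  then have "L ** Gm ** transpose L ** (Gm ** Gm) = Gm" by (simp add: matrix_mul_assoc)
  then have X: "L ** Gm ** transpose L = Gm" using Gm_Gm by simp
  have "(L ** Gm ** transpose L) $ a0 $ a1 = (\<Sum>e1\<in>UNIV. (\<Sum>e0\<in>UNIV. L $ a0 $ e0 * gm e0 e1) * L $ a1 $ e1)"
    by (simp add: matrix_matrix_mult_def Gm_def transpose_def)
  also have "\<dots> = (\<Sum>e1\<in>UNIV. \<Sum>e0\<in>UNIV. L $ a0 $ e0 * L $ a1 $ e1 * gm e0 e1)"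
    by (simp add: sum_distrib_right sum_distrib_left mult_ac)
  also have "\<dots> = (\<Sum>e0\<in>UNIV. \<Sum>e1\<in>UNIV. L $ a0 $ e0 * L $ a1 $ e1 * gm e0 e1)"
    by (rule sum.swap)
  finally show ?thesis using X by (simp add: Gm_def)
qed

lemma len0: "{B::'a list. length B = 0} = {[]}" by auto

lemma TL_gprod:
  assumes "lorentz L"
  shows "length A = 2 * m \<Longrightarrow> TL L (2 * m) (gprod m) A = gprod m A"
proof (induction m arbitrary: A)
  case 0 then show ?case by (simp add: TL_def len0)
next
  case (Suc m)
  then obtain a0 a1 A' where A: "A = a0 # a1 # A'" using len2[of A] by auto
  have lA': "length A' = 2 * m" using Suc.prems A by simp
  have "TL L (2 * Suc m) (gprod (Suc m)) A
     = (\<Sum>e0\<in>UNIV. \<Sum>e1\<in>UNIV. \<Sum>B\<in>{B. length B = 2 * m}.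
          (\<Prod>i<Suc (Suc (2 * m)). L $ (A ! i) $ ((e0 # e1 # B) ! i)) * gprod (Suc m) (e0 # e1 # B))"
    unfolding TL_def by (simp add: sum_len_Suc)
  also have "\<dots> = (\<Sum>e0\<in>UNIV. \<Sum>e1\<in>UNIV. L $ a0 $ e0 * L $ a1 $ e1 * gm e0 e1 *
          (\<Sum>B\<in>{B. length B = 2 * m}. (\<Prod>i<2 * m. L $ (A' ! i) $ (B ! i)) * gprod m B))"
    unfolding A prod.lessThan_Suc_shift gprod_Suc by (simp add: sum_distrib_left mult_ac)
  also have "\<dots> = (\<Sum>e0\<in>UNIV. \<Sum>e1\<in>UNIV. L $ a0 $ e0 * L $ a1 $ e1 * gm e0 e1) * gprod m A'"
    using Suc.IH[OF lA'] unfolding TL_def by (simp add: sum_distrib_right)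
  also have "\<dots> = gprod (Suc m) A" using lorentz_dual[OF assms] A by (simp add: gprod_Suc)
  finally show ?case .
qed

lemma TL_perm:
  assumes p: "p permutes {..<k}" and lA: "length A = k"
  shows "(\<Sum>E\<in>{E::4 list. length E = k}. (\<Prod>i<k. L $ (A ! i) $ (E ! i)) * T (permute_list p E))
       = TL L k T (permute_list p A)"
  unfolding TL_def
proof (rule sum.reindex_bij_witness[where i="permute_list (inv p)" and j="permute_list p"])
  have ip: "inv p permutes {..<k}" using permutes_inv[OF p] .
  fix E :: "4 list" assume "E \<in> {E. length E = k}"
  then have lE: "length E = k" by simp
  show "permute_list (inv p) (permute_list p E) = E"
    using permute_list_compose[of "inv p" E p] ip lE permutes_inv_o(1)[OF p] by simp
  show "permute_list p E \<in> {E. length E = k}" using lE by simp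
  have "(\<Prod>i<k. L $ (permute_list p A ! i) $ (permute_list p E ! i)) = (\<Prod>i<k. L $ (A ! p i) $ (E ! p i))"
    using lA lE p by (intro prod.cong refl) (simp add: permute_list_nth)
  also have "\<dots> = (\<Prod>i<k. L $ (A ! i) $ (E ! i))"
    using prod.permute[OF p, of "\<lambda>i. L $ (A ! i) $ (E ! i)"] by (simp add: o_def)
  finally show "(\<Prod>i<k. L $ (permute_list p A ! i) $ (permute_list p E ! i)) * T (permute_list p E)
      = (\<Prod>i<k. L $ (A ! i) $ (E ! i)) * T (permute_list p E)" by simp
next
  have ip: "inv p permutes {..<k}" using permutes_inv[OF p] .
  fix E :: "4 list" assume "E \<in> {E. length E = k}"
  then have lE: "length E = k" by simp
  show "permute_list p (permute_list (inv p) E) = E"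
    using permute_list_compose[of p E "inv p"] p lE permutes_inv_o(2)[OF p] by simp
  show "permute_list (inv p) E \<in> {E. length E = k}" using lE by simp
qed

lemma TL_symm:
  assumes lA: "length A = k"
  shows "TL L k (symm T) A = symm (TL L k T) A"
proof -
  let ?P = "{p. p permutes {..<k}}"
  have "TL L k (symm T) A = (\<Sum>E\<in>{E::4 list. length E = k}. (\<Prod>i<k. L $ (A ! i) $ (E ! i)) *
      ((\<Sum>p\<in>?P. T (permute_list p E)) / fact k))"
    unfolding TL_def by (intro sum.cong refl) (simp add: symm_alt)
  also have "\<dots> = (\<Sum>p\<in>?P. \<Sum>E\<in>{E::4 list. length E = k}. (\<Prod>i<k. L $ (A ! i) $ (E ! i)) * T (permute_list p E)) / fact k"
    by (simp add: sum_distrib_left sum_divide_distrib[symmetric] sum.swap[of _ "{E::4 list. length E = k}"])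
  also have "\<dots> = (\<Sum>p\<in>?P. TL L k T (permute_list p A)) / fact k"
    using TL_perm lA by (intro arg_cong2[where f="(/)"] sum.cong refl) auto
  also have "\<dots> = symm (TL L k T) A" using lA by (simp add: symm_alt)
  finally show ?thesis .
qed

lemma TL_S:
  assumes "lorentz L" "even n" "length X = n"
  shows "TL L n (symm (gprod (n div 2))) X = symm (gprod (n div 2)) X"
proof -
  have "TL L n (symm (gprod (n div 2))) X = symm (TL L n (gprod (n div 2))) X" using TL_symm assms by blast
  also have "\<dots> = symm (gprod (n div 2)) X"
  proof (rule symm_cong)
    fix ys :: "4 list" assume "length ys = length X"
    then have "length ys = 2 * (n div 2)" using assms by simp
    then show "TL L n (gprod (n div 2)) ys = gprod (n div 2) ys"
      using TL_gprod[OF assms(1)] assms(2) by fastforce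
  qed
  finally show ?thesis .
qed

lemma sum_split_append:
  "(\<Sum>E\<in>{E::('a::finite) list. length E = k + r}. f E) = (\<Sum>B\<in>{B. length B = k}. \<Sum>C\<in>{C. length C = r}. f (B @ C))"
proof (induction k arbitrary: f)
  case 0 then show ?case by (simp add: len0)
next
  case (Suc k)
  have "(\<Sum>E\<in>{E::'a list. length E = Suc k + r}. f E) = (\<Sum>e\<in>UNIV. \<Sum>E\<in>{E. length E = k + r}. f (e # E))"
    using sum_len_Suc[where r="k + r" and f=f] by simp
  also have "\<dots> = (\<Sum>e\<in>UNIV. \<Sum>B\<in>{B. length B = k}. \<Sum>C\<in>{C. length C = r}. f (e # B @ C))"
    using Suc.IH by simp
  also have "\<dots> = (\<Sum>B\<in>{B. length B = Suc k}. \<Sum>C\<in>{C. length C = r}. f (B @ C))"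
    using sum_len_Suc[where r=k and f="\<lambda>B. \<Sum>C\<in>{C. length C = r}. f (B @ C)"] by simp
  finally show ?case .
qed

lemma prod_split: "(\<Prod>i<k + r. f i) = (\<Prod>i<k. f i) * (\<Prod>j<r. f (k + j :: nat))"
  by (induction r) (simp_all add: mult_ac)

lemma prod_sum_lists:
  fixes f :: "nat \<Rightarrow> 'a::finite \<Rightarrow> real"
  shows "(\<Prod>j<r. \<Sum>a\<in>UNIV. f j a) = (\<Sum>D\<in>{D::('a::finite) list. length D = r}. \<Prod>j<r. f j (D ! j))"
proof (induction r arbitrary: f)
  case 0 then show ?case by (simp add: len0)
next
  case (Suc r)
  have "(\<Prod>j<Suc r. \<Sum>a\<in>UNIV. f j a) = (\<Sum>a\<in>UNIV. f 0 a) * (\<Prod>j<r. \<Sum>a\<in>UNIV. f (Suc j) a)"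
    by (rule prod.lessThan_Suc_shift)
  also have "\<dots> = (\<Sum>a\<in>UNIV. f 0 a) * (\<Sum>D\<in>{D::'a list. length D = r}. \<Prod>j<r. f (Suc j) (D ! j))"
    using Suc.IH[of "\<lambda>j. f (Suc j)"] by simp
  also have "\<dots> = (\<Sum>a\<in>UNIV. \<Sum>D\<in>{D::'a list. length D = r}. \<Prod>j<Suc r. f j ((a # D) ! j))"
    unfolding prod.lessThan_Suc_shift by (simp add: sum_product)
  also have "\<dots> = (\<Sum>D\<in>{D::'a list. length D = Suc r}. \<Prod>j<Suc r. f j (D ! j))"
    by (simp only: sum_len_Suc)
  finally show ?case .
qed


lemma cov_nth: "cov_act mu L $ c = (\<Sum>a\<in>UNIV. mu $ a * L $ a $ c)"
  by (simp add: cov_act_def)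

lemma cov_lhsT:
  assumes L: "lorentz L" and n: "even n" and rn: "r \<le> n" and lA: "length A = n - r"
  shows "lhsT n r mu A = (\<Sum>B\<in>{B::4 list. length B = n - r}. (\<Prod>i<n - r. L $ (A ! i) $ (B ! i)) * lhsT n r (cov_act mu L) B)"
proof -
  define k where "k = n - r"
  have nk: "n = k + r" using rn k_def by simp
  have lAk: "length A = k" using lA k_def by simp
  let ?S = "symm (gprod (n div 2))"
  let ?LB = "\<lambda>B. \<Prod>i<k. L $ (A ! i) $ (B ! i)"
  let ?LD = "\<lambda>D C. \<Prod>j<r. L $ (D ! j) $ (C ! j)"
  let ?mu = "\<lambda>D. \<Prod>j<r. mu $ (D ! j)"
  have "lhsT n r mu A = (\<Sum>D\<in>{D::4 list. length D = r}. ?S (A @ D) * ?mu D)"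
    by (simp add: lhsT_def)
  also have "\<dots> = (\<Sum>D\<in>{D::4 list. length D = r}. TL L n ?S (A @ D) * ?mu D)"
  proof (intro sum.cong refl)
    fix D :: "4 list" assume "D \<in> {D. length D = r}"
    then have "length (A @ D) = n" using lA rn by simp
    then show "?S (A @ D) * ?mu D = TL L n ?S (A @ D) * ?mu D" using TL_S[OF L n] by simp
  qed
  also have "\<dots> = (\<Sum>D\<in>{D::4 list. length D = r}. (\<Sum>B\<in>{B::4 list. length B = k}. \<Sum>C\<in>{C::4 list. length C = r}.
        ?LB B * ?LD D C * ?S (B @ C)) * ?mu D)"
  proof (intro sum.cong refl arg_cong2[where f="(*)"])
    fix D :: "4 list" assume "D \<in> {D. length D = r}"
    then have lD: "length D = r" by simp
    have "TL L n ?S (A @ D) = (\<Sum>E\<in>{E::4 list. length E = k + r}. (\<Prod>i<k + r. L $ ((A @ D) ! i) $ (E ! i)) * ?S E)"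
      unfolding TL_def nk ..
    also have "\<dots> = (\<Sum>B\<in>{B::4 list. length B = k}. \<Sum>C\<in>{C::4 list. length C = r}.
        (\<Prod>i<k + r. L $ ((A @ D) ! i) $ ((B @ C) ! i)) * ?S (B @ C))"
      by (rule sum_split_append)
    also have "\<dots> = (\<Sum>B\<in>{B::4 list. length B = k}. \<Sum>C\<in>{C::4 list. length C = r}. ?LB B * ?LD D C * ?S (B @ C))"
    proof (intro sum.cong refl)
      fix B C :: "4 list" assume "B \<in> {B. length B = k}" "C \<in> {C. length C = r}"
      then have lB: "length B = k" by simp
      have "(\<Prod>i<k + r. L $ ((A @ D) ! i) $ ((B @ C) ! i)) = ?LB B * ?LD D C"
        unfolding prod_split
      proof (intro arg_cong2[where f="(*)"] prod.cong refl)
        fix i assume "i \<in> {..<k}"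
        then show "L $ ((A @ D) ! i) $ ((B @ C) ! i) = L $ (A ! i) $ (B ! i)"
          using lAk lB by (simp add: nth_append)
      next
        fix j assume "j \<in> {..<r}"
        show "L $ ((A @ D) ! (k + j)) $ ((B @ C) ! (k + j)) = L $ (D ! j) $ (C ! j)"
          using lAk lB by (simp add: nth_append)
      qed
      then show "(\<Prod>i<k + r. L $ ((A @ D) ! i) $ ((B @ C) ! i)) * ?S (B @ C) = ?LB B * ?LD D C * ?S (B @ C)"
        by simp
    qed
    finally show "TL L n ?S (A @ D) = (\<Sum>B\<in>{B::4 list. length B = k}. \<Sum>C\<in>{C::4 list. length C = r}. ?LB B * ?LD D C * ?S (B @ C))" .
  qed
  also have "\<dots> = (\<Sum>D\<in>{D::4 list. length D = r}. \<Sum>B\<in>{B::4 list. length B = k}. \<Sum>C\<in>{C::4 list. length C = r}.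
        ?LB B * (?S (B @ C) * (?mu D * ?LD D C)))"
    by (simp add: sum_distrib_right sum_distrib_left mult_ac)
  also have "\<dots> = (\<Sum>B\<in>{B::4 list. length B = k}. \<Sum>D\<in>{D::4 list. length D = r}. \<Sum>C\<in>{C::4 list. length C = r}.
        ?LB B * (?S (B @ C) * (?mu D * ?LD D C)))"
    by (rule sum.swap)
  also have "\<dots> = (\<Sum>B\<in>{B::4 list. length B = k}. \<Sum>C\<in>{C::4 list. length C = r}. \<Sum>D\<in>{D::4 list. length D = r}.
        ?LB B * (?S (B @ C) * (?mu D * ?LD D C)))"
    by (intro sum.cong refl sum.swap)
  also have "\<dots> = (\<Sum>B\<in>{B::4 list. length B = k}. ?LB B * lhsT n r (cov_act mu L) B)"
  proof (intro sum.cong refl)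
    fix B :: "4 list"
    have "lhsT n r (cov_act mu L) B = (\<Sum>C\<in>{C::4 list. length C = r}. ?S (B @ C) *
        (\<Sum>D\<in>{D::4 list. length D = r}. ?mu D * ?LD D C))"
    proof -
      have "(\<Prod>j<r. cov_act mu L $ (C ! j)) = (\<Sum>D\<in>{D::4 list. length D = r}. ?mu D * ?LD D C)" for C :: "4 list"
      proof -
        have "(\<Prod>j<r. cov_act mu L $ (C ! j)) = (\<Prod>j<r. \<Sum>a\<in>UNIV. mu $ a * L $ a $ (C ! j))"
          by (simp add: cov_nth)
        also have "\<dots> = (\<Sum>D\<in>{D::4 list. length D = r}. \<Prod>j<r. mu $ (D ! j) * L $ (D ! j) $ (C ! j))"
          by (rule prod_sum_lists)
        also have "\<dots> = (\<Sum>D\<in>{D::4 list. length D = r}. ?mu D * ?LD D C)"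
          by (simp add: prod.distrib)
        finally show ?thesis .
      qed
      then show ?thesis unfolding lhsT_def by simp
    qed
    then show "(\<Sum>C\<in>{C::4 list. length C = r}. \<Sum>D\<in>{D::4 list. length D = r}. ?LB B * (?S (B @ C) * (?mu D * ?LD D C)))
        = ?LB B * lhsT n r (cov_act mu L) B"
      by (simp add: sum_distrib_left)
  qed
  finally show ?thesis unfolding k_def .
qed

theorem proposition8:
  fixes n r :: nat
  assumes "even n" and "r \<le> n"
  shows "in_F (n - r) (\<lambda>lam mu A. lhsT n r mu A)
    \<and> (\<forall>mu A. timelike mu \<longrightarrow> length A = n - r \<longrightarrow>
         lhsT n r mu A =
           (\<Sum>s = 0..(n - r) div 2. phicoef n r s (gam mu) * symm (gmuT s mu) A))"
proof
  show "in_F (n - r) (\<lambda>lam mu A. lhsT n r mu A)"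
    unfolding in_F_def
  proof (intro conjI allI impI)
    fix A :: "4 list"
    show "smooth_on ((UNIV::real set) \<times> {mu. timelike mu}) (\<lambda>p::real \<times> (real^4). lhsT n r (snd p) A)"
      by (rule smooth_lhsT)
  next
    fix lam :: real and mu :: "real^4"
    show "tsym (n - r) (lhsT n r mu)" by (rule tsym_lhsT)
  next
    fix lam :: real and mu :: "real^4"
    show "tsym (Suc (n - r)) (\<lambda>xs. dmu (\<lambda>lam mu A. lhsT n r mu A) lam mu (butlast xs) (last xs))"
      by (rule tsym_dmu[OF assms(2)])
  next
    show "covariant (n - r) (\<lambda>lam mu A. lhsT n r mu A)"
      unfolding covariant_def using cov_lhsT assms by blast
  qed
next
  show "\<forall>mu A. timelike mu \<longrightarrow> length A = n - r \<longrightarrow>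
         lhsT n r mu A = (\<Sum>s = 0..(n - r) div 2. phicoef n r s (gam mu) * symm (gmuT s mu) A)"
    using identity assms by blast
qed


end
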